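(* Consider a seller with one item and a single ex-post rational buyer. The item's quality $q\in Q=[q_1,q_2]$ is drawn from a distribution with CDF $G$ and density $g$, observed only by the seller; the buyer's valuation is $v(q)$ with $v:Q\to\mathbb{R}^+$ monotone increasing with inverse $v^{-1}$. A fixed-price signaling mechanism is a pair $(\pi,p)$ where $\pi:Q\to[0,1]$ gives the probability of sending signal $1$ ("buy") when the quality is $q$ (signal $0$, "not buy", is sent with probability $1-\pi(q)$), and $p$ is a fixed price. The mechanism is obedient for the ex-post rational buyer if $\int_{q_1}^{v^{-1}(p)}\pi(q)g(q)\,\mathrm{d}q=0$ and $\int_{v^{-1}(p)}^{q_2}[1-\pi(q)]g(q)\,\mathrm{d}q=0$. The seller's revenue is $Rev_{sig}(\pi,p)=p\int_Q\pi(q)g(q)\,\mathrm{d}q$. Then the mechanism $(\pi^*,p^* )$ with $p^*\in\arg\max_p[1-G(v^{-1}(p))]\cdot p$ and $\pi^*(q)=0$ if $q<v^{-1}(p^* )$, $\pi^*(q)=1$ otherwise, is an optimal (revenue-maximizing) obedient fixed-price signaling mechanism.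
   Context: An ex-post rational buyer buys if and only if his valuation $v(q)$ at the realized quality is at least $p$; obedience means that after signal 1 the buyer is (almost surely) willing to buy and after signal 0 he is (almost surely) not willing to buy, which the paper expresses by the two integral conditions above. Optimality is over all obedient pairs $(\pi,p)$. *)

theory Defs
  imports "HOL-Analysis.Analysis"
begin

text \<open>We require
  pi to take values in [0,1] on Q and the integrand pi * g to be integrable on Q
  (so that all integrals in the paper exist).\<close>
definition sig_mechanism :: "real set \<Rightarrow> (real \<Rightarrow> real) \<Rightarrow> (real \<Rightarrow> real) \<Rightarrow> bool" where
  "sig_mechanism Q g \<pi> \<longleftrightarrow>
     (\<forall>q\<in>Q. 0 \<le> \<pi> q \<and> \<pi> q \<le> 1) \<and> (\<lambda>q. \<pi> q * g q) integrable_on Q"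

text \<open>For p in the range of v these
  are the paper's integrals over [q1, v^-1 p] and [v^-1 p, q2].\<close>
definition obedient :: "real set \<Rightarrow> (real \<Rightarrow> real) \<Rightarrow> (real \<Rightarrow> real) \<Rightarrow> (real \<Rightarrow> real) \<Rightarrow> real \<Rightarrow> bool" where
  "obedient Q v g \<pi> p \<longleftrightarrow>
     integral {q\<in>Q. v q < p} (\<lambda>q. \<pi> q * g q) = 0 \<and>
     integral {q\<in>Q. p \<le> v q} (\<lambda>q. (1 - \<pi> q) * g q) = 0"

definition rev_sig :: "real set \<Rightarrow> (real \<Rightarrow> real) \<Rightarrow> (real \<Rightarrow> real) \<Rightarrow> real \<Rightarrow> real" where
  "rev_sig Q g \<pi> p = p * integral Q (\<lambda>q. \<pi> q * g q)"

end

theory Submission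
  imports Defs
begin

lemma spike_int:
  fixes f :: "real \<Rightarrow> real"
  assumes "f integrable_on T" "S - T \<subseteq> {a}" "T - S \<subseteq> {a}"
  shows "f integrable_on S \<and> integral S f = integral T f"
proof -
  have n1: "negligible {x \<in> S - T. f x \<noteq> 0}"
    by (rule negligible_subset[of "{a}"]) (use assms in auto)
  have n2: "negligible {x \<in> T - S. f x \<noteq> 0}"
    by (rule negligible_subset[of "{a}"]) (use assms in auto)
  have "(f has_integral integral T f) T" using assms(1) by auto
  hence "(f has_integral integral T f) S" using has_integral_spike_set_eq[OF n1 n2] by blast
  thus ?thesis by (auto simp: integral_unique)
qed

theorem mainTheorem3:
  fixes q1 q2 p_star :: real and G g v :: "real \<Rightarrow> real"
  assumes "q1 < q2"
    and "\<forall>q\<in>{q1..q2}. 0 \<le> g q"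
    and "g integrable_on {q1..q2}"
    and "integral {q1..q2} g = 1"
    and "\<forall>x\<in>{q1..q2}. G x = integral {q1..x} g"
    and "strict_mono_on {q1..q2} v"
    and "\<forall>q\<in>{q1..q2}. 0 \<le> v q"
    and "p_star \<in> v ` {q1..q2}"
    and "\<forall>p\<in>v ` {q1..q2}.
           (1 - G (the_inv_into {q1..q2} v p)) * p
             \<le> (1 - G (the_inv_into {q1..q2} v p_star)) * p_star"
  shows "sig_mechanism {q1..q2} g (\<lambda>q. if q < the_inv_into {q1..q2} v p_star then 0 else 1)
       \<and> obedient {q1..q2} v g (\<lambda>q. if q < the_inv_into {q1..q2} v p_star then 0 else 1) p_star
       \<and> (\<forall>\<pi> p. sig_mechanism {q1..q2} g \<pi> \<and> obedient {q1..q2} v g \<pi> p \<longrightarrow>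
             rev_sig {q1..q2} g \<pi> p
               \<le> rev_sig {q1..q2} g (\<lambda>q. if q < the_inv_into {q1..q2} v p_star then 0 else 1) p_star)"
proof -
  define Q where "Q = {q1..q2}"
  define H where "H x = integral {x..q2} g" for x
  have inj: "inj_on v Q" using assms(6) strict_mono_on_imp_inj_on Q_def by blast
  have smono: "\<And>x y. x \<in> Q \<Longrightarrow> y \<in> Q \<Longrightarrow> x < y \<Longrightarrow> v x < v y"
    using assms(6) Q_def by (auto simp: strict_mono_on_def)
  have vle: "\<And>x y. x \<in> Q \<Longrightarrow> y \<in> Q \<Longrightarrow> v x \<le> v y \<longleftrightarrow> x \<le> y"
    proof -
    fix x y assume "x \<in> Q" "y \<in> Q"
    thus "v x \<le> v y \<longleftrightarrow> x \<le> y"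
      using smono[of x y] smono[of y x] by (cases "x < y"; cases "y < x") auto
  qed
  have gi: "g integrable_on Q" using assms(3) Q_def by simp
  have GH: "1 - G x = H x" if "x \<in> Q" for x
    using Henstock_Kurzweil_Integration.integral_combine[where a=q1 and c=x and b=q2 and f=g] that assms(3,4,5) Q_def H_def by auto
  have Hnn: "0 \<le> H x" if "x \<in> Q" for x
  proof -
    have "g integrable_on {x..q2}" using integrable_subinterval_real[OF assms(3)] that Q_def by auto
    then show ?thesis using assms(2) that Q_def unfolding H_def by (intro integral_nonneg) auto
  qed
  define xs where "xs = the_inv_into Q v p_star"
  have psQ: "p_star \<in> v ` Q" using assms(8) Q_def by simp
  have xsQ: "xs \<in> Q" unfolding xs_def by (rule the_inv_into_into[OF inj psQ subset_refl])
  have vxs: "v xs = p_star" unfolding xs_def by (rule f_the_inv_into_f[OF inj psQ])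
  define pis where "pis q = (if q < xs then 0 else 1::real)" for q
  have pisg: "pis q * g q = (if q \<in> {xs..q2} then g q else 0)" if "q \<in> Q" for q
    using that Q_def pis_def by auto
  have pis_int: "(\<lambda>q. pis q * g q) integrable_on Q"
  proof -
    have e: "{xs..q2} \<inter> Q = {xs..q2}" using xsQ Q_def by auto
    have "g integrable_on {xs..q2}"
      using integrable_subinterval_real[OF assms(3)] xsQ Q_def by auto
    hence "g integrable_on {xs..q2} \<inter> Q" using e by simp
    hence "(\<lambda>q. if q \<in> {xs..q2} then g q else 0) integrable_on Q"
      by (rule integrable_restrict_Int[THEN iffD2])
    moreover have "(\<lambda>q. if q \<in> {xs..q2} then g q else 0) integrable_on Q \<longleftrightarrow> (\<lambda>q. pis q * g q) integrable_on Q"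
      by (rule integrable_cong) (simp add: pisg)
    ultimately show ?thesis by simp
  qed
  have rev_star: "rev_sig Q g pis p_star = p_star * H xs"
  proof -
    have "integral Q (\<lambda>q. pis q * g q) = integral Q (\<lambda>q. if q \<in> {xs..q2} then g q else 0)"
      using pisg by (rule integral_cong)
    also have "\<dots> = integral ({xs..q2} \<inter> Q) g" by (rule integral_restrict_Int)
    also have "{xs..q2} \<inter> Q = {xs..q2}" using xsQ Q_def by auto
    finally show ?thesis unfolding rev_sig_def H_def by simp
  qed
  have R_eq: "(1 - G (the_inv_into Q v p_star)) * p_star = p_star * H xs"
    using GH[OF xsQ] xs_def by simp
  have pstar_nn: "0 \<le> p_star" using vxs xsQ assms(7) Q_def by auto
  have part1: "sig_mechanism Q g pis"
    unfolding sig_mechanism_def using pis_int pis_def by auto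
  have part2: "obedient Q v g pis p_star"
  proof -
    have "integral {q\<in>Q. v q < p_star} (\<lambda>q. pis q * g q) = integral {q\<in>Q. v q < p_star} (\<lambda>q. 0)"
    proof (rule integral_cong)
      fix q assume "q \<in> {q\<in>Q. v q < p_star}"
      hence "q < xs" using vle[of xs q] xsQ vxs by auto
      thus "pis q * g q = 0" using pis_def by simp
    qed
    moreover have "integral {q\<in>Q. p_star \<le> v q} (\<lambda>q. (1 - pis q) * g q) = integral {q\<in>Q. p_star \<le> v q} (\<lambda>q. 0)"
    proof (rule integral_cong)
      fix q assume "q \<in> {q\<in>Q. p_star \<le> v q}"
      hence "\<not> q < xs" using vle[of xs q] xsQ vxs by auto
      thus "(1 - pis q) * g q = 0" using pis_def by simp
    qed
    ultimately show ?thesis unfolding obedient_def by simp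
  qed
  have part3: "rev_sig Q g \<pi> p \<le> p_star * H xs"
    if sm: "sig_mechanism Q g \<pi>" and ob: "obedient Q v g \<pi> p" for \<pi> p
  proof -
    define U where "U = {q\<in>Q. p \<le> v q}"
    define L where "L = {q\<in>Q. v q < p}"
    define a where "a = Inf (insert q2 U)"
    have UQ: "insert q2 U \<subseteq> Q" using U_def Q_def assms(1) by auto
    have bdd: "bdd_below (insert q2 U)" using UQ Q_def by (metis bdd_below_Icc bdd_below_mono)
    have aq2: "a \<le> q2" unfolding a_def using bdd by (intro cInf_lower) auto
    have q1a: "q1 \<le> a" unfolding a_def using UQ Q_def by (intro cInf_greatest) auto
    have aQ: "a \<in> Q" using aq2 q1a Q_def by auto
    have below: "\<not> p \<le> v q" if "q \<in> Q" "q < a" for q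
    proof
      assume "p \<le> v q"
      hence "q \<in> insert q2 U" using that U_def by auto
      hence "a \<le> q" unfolding a_def using bdd by (intro cInf_lower) auto
      thus False using that by simp
    qed
    have above: "p \<le> v q" if qQ: "q \<in> Q" and aq: "a < q" for q
    proof -
      obtain x where x: "x \<in> insert q2 U" "x < q"
        using aq cInf_less_iff[of "insert q2 U" q] bdd a_def by auto
      have "x \<noteq> q2" using x qQ Q_def by auto
      hence "x \<in> U" using x by auto
      hence "p \<le> v x" "x \<in> Q" using U_def by auto
      thus ?thesis using smono[of x q] x qQ by auto
    qed
    define f where "f q = \<pi> q * g q" for q
    have fi: "f integrable_on Q" using sm unfolding sig_mechanism_def f_def by simp
    have fi1: "f integrable_on {q1..a}" using integrable_subinterval_real[of f q1 q2] fi Q_def aQ by auto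
    have fi2: "f integrable_on {a..q2}" using integrable_subinterval_real[of f q1 q2] fi Q_def aQ by auto
    have gi2: "g integrable_on {a..q2}" using integrable_subinterval_real[OF assms(3)] aQ Q_def by auto
    have s1: "L - {q1..a} \<subseteq> {a}"
    proof
      fix q assume q: "q \<in> L - {q1..a}"
      hence "q \<in> Q" "v q < p" using L_def by auto
      moreover have "\<not> a < q" using above calculation by fastforce
      ultimately show "q \<in> {a}" using q Q_def by auto
    qed
    have s2: "{q1..a} - L \<subseteq> {a}"
    proof
      fix q assume q: "q \<in> {q1..a} - L"
      hence qQ: "q \<in> Q" using aQ Q_def by auto
      have "\<not> q < a"
      proof
        assume "q < a"
        hence "v q < p" using below[OF qQ] by simp
        thus False using q qQ L_def by auto
      qed
      thus "q \<in> {a}" using q by auto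
    qed
    have L1: "integral L f = integral {q1..a} f"
      using spike_int[OF fi1 s1 s2] by simp
    have s3: "U - {a..q2} \<subseteq> {a}"
    proof
      fix q assume q: "q \<in> U - {a..q2}"
      hence qQ: "q \<in> Q" "p \<le> v q" using U_def by auto
      have "\<not> q < a" using below qQ by blast
      thus "q \<in> {a}" using q qQ Q_def by auto
    qed
    have s4: "{a..q2} - U \<subseteq> {a}"
    proof
      fix q assume q: "q \<in> {a..q2} - U"
      hence qQ: "q \<in> Q" using aQ Q_def by auto
      have "\<not> a < q"
      proof
        assume "a < q"
        hence "p \<le> v q" using above[OF qQ] by simp
        thus False using q qQ U_def by auto
      qed
      thus "q \<in> {a}" using q by auto
    qed
    have U1: "integral U (\<lambda>q. (1 - \<pi> q) * g q) = integral {a..q2} (\<lambda>q. (1 - \<pi> q) * g q)"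
    proof -
      have "(\<lambda>q. g q - f q) integrable_on {a..q2}" using gi2 fi2 by (rule integrable_diff)
      hence "(\<lambda>q. (1 - \<pi> q) * g q) integrable_on {a..q2}" by (simp add: f_def algebra_simps)
      thus ?thesis using spike_int[OF _ s3 s4] by simp
    qed
    have z1: "integral {q1..a} f = 0" using ob L1 unfolding obedient_def L_def f_def by simp
    have "integral {a..q2} (\<lambda>q. g q - f q) = 0"
      using ob U1 unfolding obedient_def U_def f_def by (simp add: algebra_simps)
    hence z2: "integral {a..q2} f = H a" using integral_diff[OF gi2 fi2] H_def by simp
    have "integral Q f = integral {q1..a} f + integral {a..q2} f"
      using Henstock_Kurzweil_Integration.integral_combine[where a=q1 and c=a and b=q2 and f=f] q1a aq2 fi Q_def by simp
    hence revp: "rev_sig Q g \<pi> p = p * H a" using z1 z2 unfolding rev_sig_def f_def[symmetric] by simp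
    have Rnn: "0 \<le> p_star * H xs" using pstar_nn Hnn[OF xsQ] by simp
    have bnd: "p * H b \<le> p_star * H xs" if "b \<in> Q" "a < b" "0 < p" for b
    proof -
      have "p \<le> v b" using above that by auto
      hence "p * H b \<le> v b * H b" using Hnn[OF that(1)] by (simp add: mult_right_mono)
      also have "\<dots> = (1 - G (the_inv_into Q v (v b))) * v b"
        using the_inv_into_f_f[OF inj that(1)] GH[OF that(1)] by simp
      also have "\<dots> \<le> p_star * H xs" using assms(9) that(1) Q_def R_eq by (auto simp: mult.commute)
      finally show ?thesis .
    qed
    have "p * H a \<le> p_star * H xs"
    proof (cases "p \<le> 0")
      case True
      then show ?thesis using Hnn[OF aQ] Rnn by (meson mult_nonpos_nonneg order_trans)
    next
      case pF: False
      show ?thesis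
      proof (cases "a = q2")
        case True
        then show ?thesis using Rnn H_def by simp
      next
        case False
        hence aq: "a < q2" using aq2 by simp
        have "continuous_on Q H" unfolding Q_def H_def
          by (rule indefinite_integral_continuous_1'[OF assms(3)])
        hence "(H \<longlongrightarrow> H a) (at a within Q)" using aQ by (simp add: continuous_on_def)
        hence "(H \<longlongrightarrow> H a) (at a within {a..q2})"
          by (rule tendsto_within_subset) (use aQ Q_def in auto)
        hence lim: "(H \<longlongrightarrow> H a) (at_right a)" using at_within_Icc_at_right[OF aq] by simp
        have lim2: "((\<lambda>b. p * H b) \<longlongrightarrow> p * H a) (at_right a)"
          by (intro tendsto_mult tendsto_const lim)
        have ev: "eventually (\<lambda>b. p * H b \<le> p_star * H xs) (at_right a)"
          unfolding eventually_at_right[OF aq]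
          using bnd pF aQ aq Q_def by (intro exI[of _ q2]) auto
        show ?thesis
          by (rule tendsto_le[OF _ tendsto_const lim2 ev]) simp
      qed
    qed
    thus ?thesis using revp by simp
  qed
  show ?thesis
    using part1 part2 part3 rev_star unfolding Q_def[symmetric] pis_def[abs_def] xs_def by auto
qed

end
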